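(* Let $D$ be a finite domain and let $\mathcal F$ be a family of functions of the form $f:D^L\to D$ (with $L$ ranging over positive integers). Then there exists a finite family $\Gamma$ of promise relations over $D$ such that $\mathcal F=\operatorname{poly}(\Gamma)$ if and only if $\mathcal F$ is projection-closed, finitizable, and contains the identity function $\operatorname{id}_D:D\to D$, $\operatorname{id}_D(x)=x$.
   Context: A promise relation over $D$ is a pair $(P,Q)$ with $P\subseteq Q\subseteq D^k$. $f:D^L\to D$ is a weak polymorphism of $(P,Q)$ if for all $x^{(1)},\dots,x^{(L)}\in P$, $(f(x^{(1)}_1,\dots,x^{(L)}_1),\dots,f(x^{(1)}_k,\dots,x^{(L)}_k))\in Q$; $\operatorname{poly}(\Gamma)$ is the set of functions that are weak polymorphisms of every member of $\Gamma$. For $f:D^L\to D$ and any map $\pi:[L]\to[R]$, the projection $f^\pi:D^R\to D$ is defined by $f^\pi(y)=f(x)$ where $x_i=y_{\pi(i)}$ for all $i\in[L]$. $\mathcal F$ is projection-closed if $f^\pi\in\mathcal F$ for all $f\in\mathcal F$ of arity $L$, all $R$, and all $\pi:[L]\to[R]$. $\mathcal F$ is finitizable if there exists $R\in\mathbb N$ such that for every $L$ and every $f:D^L\to D$, $f\in\mathcal F$ if and only if $f^\pi\in\mathcal F$ for all $\pi:[L]\to[R]$. *)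

theory Defs
  imports "HOL-Library.FuncSet"
begin

text \<open>The finite domain D is a type 'd of class finite. Tuples in D^n are extensional
functions on the 0-based index set {0..<n}; an L-ary function D^L \<rightarrow> D is a pair (L, f) with
L > 0 and f an extensional function on D^L (so equal functions have equal representations).\<close>

definition tuples :: "nat \<Rightarrow> (nat \<Rightarrow> 'd) set" where
  "tuples n = PiE {0..<n} (\<lambda>_. UNIV)"

definition is_fun :: "nat \<Rightarrow> ((nat \<Rightarrow> 'd) \<Rightarrow> 'd) \<Rightarrow> bool" where
  "is_fun L f \<longleftrightarrow> L > 0 \<and> f \<in> extensional (tuples L)"

definition promise_rel :: "nat \<times> (nat \<Rightarrow> 'd) set \<times> (nat \<Rightarrow> 'd) set \<Rightarrow> bool" where
  "promise_rel R \<longleftrightarrow> (case R of (k, P, Q) \<Rightarrow> P \<subseteq> Q \<and> Q \<subseteq> tuples k)"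

definition weak_poly ::
  "nat \<Rightarrow> ((nat \<Rightarrow> 'd) \<Rightarrow> 'd) \<Rightarrow> nat \<times> (nat \<Rightarrow> 'd) set \<times> (nat \<Rightarrow> 'd) set \<Rightarrow> bool" where
  "weak_poly L f R \<longleftrightarrow> (case R of (k, P, Q) \<Rightarrow>
     (\<forall>X. (\<forall>i<L. X i \<in> P) \<longrightarrow>
        (\<lambda>j\<in>{0..<k}. f (\<lambda>i\<in>{0..<L}. X i j)) \<in> Q))"

definition poly :: "(nat \<times> (nat \<Rightarrow> 'd) set \<times> (nat \<Rightarrow> 'd) set) set
    \<Rightarrow> (nat \<times> ((nat \<Rightarrow> 'd) \<Rightarrow> 'd)) set" where
  "poly \<Gamma> = {(L, f). is_fun L f \<and> (\<forall>R\<in>\<Gamma>. weak_poly L f R)}"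

definition proj :: "nat \<Rightarrow> ((nat \<Rightarrow> 'd) \<Rightarrow> 'd) \<Rightarrow> (nat \<Rightarrow> nat) \<Rightarrow> nat \<Rightarrow> ((nat \<Rightarrow> 'd) \<Rightarrow> 'd)" where
  "proj L f \<pi> R = (\<lambda>y\<in>tuples R. f (\<lambda>i\<in>{0..<L}. y (\<pi> i)))"

definition projection_closed :: "(nat \<times> ((nat \<Rightarrow> 'd) \<Rightarrow> 'd)) set \<Rightarrow> bool" where
  "projection_closed F \<longleftrightarrow>
     (\<forall>(L, f)\<in>F. \<forall>R \<pi>. \<pi> \<in> {0..<L} \<rightarrow> {0..<R} \<longrightarrow> (R, proj L f \<pi> R) \<in> F)"

definition finitizable :: "(nat \<times> ((nat \<Rightarrow> 'd) \<Rightarrow> 'd)) set \<Rightarrow> bool" where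
  "finitizable F \<longleftrightarrow> (\<exists>R::nat. \<forall>L f. is_fun L f \<longrightarrow>
     ((L, f) \<in> F \<longleftrightarrow> (\<forall>\<pi> \<in> {0..<L} \<rightarrow> {0..<R}. (R, proj L f \<pi> R) \<in> F)))"

definition id_fun :: "(nat \<Rightarrow> 'd) \<Rightarrow> 'd" where
  "id_fun = (\<lambda>x\<in>tuples 1. x 0)"

end

theory Submission
  imports Defs
begin

lemma restr_tuples[simp]: "(\<lambda>i\<in>{0..<n}. h i) \<in> tuples n"
  by (simp add: tuples_def)

lemma finite_tuples: "finite (tuples n :: (nat \<Rightarrow> 'd::finite) set)"
  unfolding tuples_def by (simp add: finite_PiE)

lemma tuples_ext: "x \<in> tuples n \<Longrightarrow> (\<lambda>j\<in>{0..<n}. x j) = x"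
  unfolding tuples_def by (simp add: PiE_def extensional_restrict)

lemma id_fun_restr: "id_fun (\<lambda>i\<in>{0..<1}. h i) = h 0"
proof -
  have "(\<lambda>i\<in>{0..<1}. h i) \<in> tuples 1" by (rule restr_tuples)
  then show ?thesis by (simp add: id_fun_def)
qed

lemma proj_app: "y \<in> tuples R \<Longrightarrow> proj L f \<pi> R y = f (\<lambda>i\<in>{0..<L}. y (\<pi> i))"
  by (simp add: proj_def)

lemma poly_proj:
  assumes "(L, f) \<in> poly \<Gamma>" "\<pi> \<in> {0..<L} \<rightarrow> {0..<R}"
  shows "(R, proj L f \<pi> R) \<in> poly \<Gamma>"
proof -
  have L: "L > 0" and fr: "\<forall>r\<in>\<Gamma>. weak_poly L f r" using assms(1) by (auto simp: poly_def is_fun_def)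
  have "0 \<in> {0..<L}" using L by simp
  then have "\<pi> 0 \<in> {0..<R}" using assms(2) by (rule funcset_mem[rotated])
  then have "R > 0" by simp
  moreover have "proj L f \<pi> R \<in> extensional (tuples R)" by (simp add: proj_def)
  moreover have "weak_poly R (proj L f \<pi> R) r" if r: "r \<in> \<Gamma>" for r
  proof -
    obtain k P Q where rk: "r = (k, P, Q)" by (cases r) auto
    have w: "\<forall>X. (\<forall>i<L. X i \<in> P) \<longrightarrow> (\<lambda>j\<in>{0..<k}. f (\<lambda>i\<in>{0..<L}. X i j)) \<in> Q"
      using fr r rk by (auto simp: weak_poly_def)
    show ?thesis unfolding rk weak_poly_def
    proof (simp, intro allI impI)
      fix X' assume X': "\<forall>i<R. X' i \<in> P"
      have "\<forall>i<L. X' (\<pi> i) \<in> P"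
      proof (intro allI impI)
        fix i assume "i < L"
        then have "\<pi> i \<in> {0..<R}" using assms(2) by auto
        then show "X' (\<pi> i) \<in> P" using X' by simp
      qed
      then have "(\<lambda>j\<in>{0..<k}. f (\<lambda>i\<in>{0..<L}. X' (\<pi> i) j)) \<in> Q"
        using spec[OF w, of "\<lambda>i. X' (\<pi> i)"] by simp
      moreover have "(\<lambda>j\<in>{0..<k}. proj L f \<pi> R (\<lambda>i\<in>{0..<R}. X' i j))
          = (\<lambda>j\<in>{0..<k}. f (\<lambda>i\<in>{0..<L}. X' (\<pi> i) j))"
      proof (rule restrict_ext)
        fix j assume "j \<in> {0..<k}"
        have "(\<lambda>i\<in>{0..<L}. (\<lambda>i\<in>{0..<R}. X' i j) (\<pi> i)) = (\<lambda>i\<in>{0..<L}. X' (\<pi> i) j)"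
          using assms(2) by (intro restrict_ext) auto
        then show "proj L f \<pi> R (\<lambda>i\<in>{0..<R}. X' i j) = f (\<lambda>i\<in>{0..<L}. X' (\<pi> i) j)"
          by (simp add: proj_app)
      qed
      ultimately show "(\<lambda>j\<in>{0..<k}. proj L f \<pi> R (\<lambda>i\<in>{0..<R}. X' i j)) \<in> Q" by simp
    qed
  qed
  ultimately show ?thesis by (auto simp: poly_def is_fun_def)
qed

lemma id_poly:
  assumes "\<forall>r\<in>\<Gamma>. promise_rel r"
  shows "(1, id_fun) \<in> poly \<Gamma>"
proof -
  have "id_fun \<in> extensional (tuples 1)" by (simp add: id_fun_def)
  moreover have "weak_poly 1 id_fun r" if r: "r \<in> \<Gamma>" for r
  proof -
    obtain k P Q where rk: "r = (k, P, Q)" by (cases r) auto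
    have PQ: "P \<subseteq> Q" "Q \<subseteq> tuples k" using assms r rk by (auto simp: promise_rel_def)
    show ?thesis unfolding rk weak_poly_def
    proof (simp only: prod.case, intro allI impI)
      fix X :: "nat \<Rightarrow> nat \<Rightarrow> _" assume "\<forall>i<(1::nat). X i \<in> P"
      then have X0: "X 0 \<in> P" by simp
      have "(\<lambda>j\<in>{0..<k}. id_fun (\<lambda>i\<in>{0..<1}. X i j)) = (\<lambda>j\<in>{0..<k}. X 0 j)"
      proof (rule restrict_ext)
        fix j
        have "(\<lambda>i\<in>{0..<1}. X i j) \<in> tuples 1" by (rule restr_tuples)
        then have "id_fun (\<lambda>i\<in>{0..<1}. X i j) = X 0 j" by (simp add: id_fun_def)
        then show "id_fun (\<lambda>i\<in>{0..<1}. X i j) = X 0 j" by simp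
      qed
      also have "\<dots> = X 0" using X0 PQ by (intro tuples_ext) auto
      finally show "(\<lambda>j\<in>{0..<k}. id_fun (\<lambda>i\<in>{0..<1}. X i j)) \<in> Q" using X0 PQ by auto
    qed
  qed
  ultimately show ?thesis by (auto simp: poly_def is_fun_def)
qed

lemma poly_finitizable:
  fixes \<Gamma> :: "(nat \<times> (nat \<Rightarrow> 'd::finite) set \<times> (nat \<Rightarrow> 'd) set) set"
  assumes fin: "finite \<Gamma>" and pr: "\<forall>r\<in>\<Gamma>. promise_rel r"
  shows "finitizable (poly \<Gamma>)"
proof -
  define R where "R = 1 + (\<Sum>r\<in>\<Gamma>. card (fst (snd r)))"
  have cardP: "card P < R" if "(k, P, Q) \<in> \<Gamma>" for k P Q
  proof -
    have "card (fst (snd (k, P, Q))) \<le> (\<Sum>r\<in>\<Gamma>. card (fst (snd r)))"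
      using fin that by (intro member_le_sum) auto
    then show ?thesis unfolding R_def by simp
  qed
  have keyF: "(L, f) \<in> poly \<Gamma> \<longleftrightarrow> (\<forall>\<pi> \<in> {0..<L} \<rightarrow> {0..<R}. (R, proj L f \<pi> R) \<in> poly \<Gamma>)"
    if isf: "is_fun L f" for L f
  proof
    assume "(L, f) \<in> poly \<Gamma>" then show "\<forall>\<pi> \<in> {0..<L} \<rightarrow> {0..<R}. (R, proj L f \<pi> R) \<in> poly \<Gamma>"
      using poly_proj by blast
  next
    assume allp: "\<forall>\<pi> \<in> {0..<L} \<rightarrow> {0..<R}. (R, proj L f \<pi> R) \<in> poly \<Gamma>"
    have L: "L > 0" using isf by (simp add: is_fun_def)
    have "weak_poly L f r" if r: "r \<in> \<Gamma>" for r
    proof -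
      obtain k P Q where rk: "r = (k, P, Q)" by (cases r) auto
      have PQ: "P \<subseteq> Q" "Q \<subseteq> tuples k" using pr r rk by (auto simp: promise_rel_def)
      have "P \<subseteq> tuples k" using PQ by blast
      then have finP: "finite P" using finite_tuples by (rule finite_subset)
      show ?thesis unfolding rk weak_poly_def
      proof (simp, intro allI impI)
        fix X assume X: "\<forall>i<L. X i \<in> P"
        define S where "S = X ` {0..<L}"
        have SP: "S \<subseteq> P" using X by (auto simp: S_def)
        have finS: "finite S" using SP finP finite_subset by blast
        define m where "m = card S"
        have "card S \<le> card P" by (rule card_mono[OF finP SP])
        moreover have "(k, P, Q) \<in> \<Gamma>" using r rk by simp
        then have "card P < R" by (rule cardP)
        ultimately have mR: "m < R" unfolding m_def by simp
        obtain g where g: "bij_betw g {0..<m} S" using ex_bij_betw_nat_finite[OF finS] m_def by blast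
        define \<pi> where "\<pi> = (\<lambda>i. inv_into {0..<m} g (X i))"
        have XS: "i < L \<Longrightarrow> X i \<in> S" for i by (auto simp: S_def)
        have pi_in: "i < L \<Longrightarrow> \<pi> i < m" for i
        proof -
          assume "i < L"
          then have "X i \<in> g ` {0..<m}" using XS g by (simp add: bij_betw_def)
          then have "inv_into {0..<m} g (X i) \<in> {0..<m}" by (rule inv_into_into)
          then show ?thesis unfolding \<pi>_def by simp
        qed
        have gpi: "i < L \<Longrightarrow> g (\<pi> i) = X i" for i
          using XS[of i] g unfolding \<pi>_def by (simp add: bij_betw_inv_into_right)
        have piR: "\<pi> \<in> {0..<L} \<rightarrow> {0..<R}"
        proof
          fix i assume "i \<in> {0..<L}"
          then have "\<pi> i < m" using pi_in by simp
          then show "\<pi> i \<in> {0..<R}" using mR by simp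
        qed
        define Y where "Y = (\<lambda>j. if j < m then g j else X 0)"
        have gS: "g ` {0..<m} = S" using g by (simp add: bij_betw_def)
        have YP: "\<forall>i<R. Y i \<in> P"
        proof (intro allI impI)
          fix i assume "i < R"
          show "Y i \<in> P"
          proof (cases "i < m")
            case True
            then have "g i \<in> S" using gS by auto
            then show ?thesis using SP True by (auto simp: Y_def)
          next
            case False
            then show ?thesis using X L by (simp add: Y_def)
          qed
        qed
        have "(R, proj L f \<pi> R) \<in> poly \<Gamma>" using allp piR by blast
        then have "\<forall>r\<in>\<Gamma>. weak_poly R (proj L f \<pi> R) r" by (simp add: poly_def)
        then have "weak_poly R (proj L f \<pi> R) (k, P, Q)" using \<open>(k, P, Q) \<in> \<Gamma>\<close> by blast
        then have "\<forall>X. (\<forall>i<R. X i \<in> P) \<longrightarrow> (\<lambda>j\<in>{0..<k}. proj L f \<pi> R (\<lambda>i\<in>{0..<R}. X i j)) \<in> Q"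
          by (simp only: weak_poly_def prod.case)
        then have "(\<lambda>j\<in>{0..<k}. proj L f \<pi> R (\<lambda>i\<in>{0..<R}. Y i j)) \<in> Q"
          using YP by (rule spec[where x=Y, THEN mp])
        moreover have "(\<lambda>j\<in>{0..<k}. proj L f \<pi> R (\<lambda>i\<in>{0..<R}. Y i j))
            = (\<lambda>j\<in>{0..<k}. f (\<lambda>i\<in>{0..<L}. X i j))"
        proof (rule restrict_ext)
          fix j assume "j \<in> {0..<k}"
          have "(\<lambda>i\<in>{0..<L}. (\<lambda>i\<in>{0..<R}. Y i j) (\<pi> i)) = (\<lambda>i\<in>{0..<L}. X i j)"
            proof (rule restrict_ext)
            fix i assume iL: "i \<in> {0..<L}"
            then have "\<pi> i < m" using pi_in by simp
            moreover have "\<pi> i < R" using \<open>\<pi> i < m\<close> mR by simp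
            ultimately show "(\<lambda>i\<in>{0..<R}. Y i j) (\<pi> i) = X i j"
              using gpi iL by (simp add: Y_def)
          qed
          then show "proj L f \<pi> R (\<lambda>i\<in>{0..<R}. Y i j) = f (\<lambda>i\<in>{0..<L}. X i j)"
            by (simp add: proj_app)
        qed
        ultimately show "(\<lambda>j\<in>{0..<k}. f (\<lambda>i\<in>{0..<L}. X i j)) \<in> Q" by simp
      qed
    qed
    then show "(L, f) \<in> poly \<Gamma>" using isf by (auto simp: poly_def)
  qed
  show ?thesis unfolding finitizable_def
  proof (intro exI[of _ R] allI impI)
    fix L and f :: "(nat \<Rightarrow> 'd) \<Rightarrow> 'd" assume "is_fun L f"
    then show "((L, f) \<in> poly \<Gamma>) = (\<forall>\<pi>\<in>{0..<L} \<rightarrow> {0..<R}. (R, proj L f \<pi> R) \<in> poly \<Gamma>)"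
      by (rule keyF)
  qed
qed

theorem theoremE1:
  fixes F :: "(nat \<times> ((nat \<Rightarrow> 'd::finite) \<Rightarrow> 'd)) set"
  assumes "\<forall>(L, f)\<in>F. is_fun L f"
  shows "(\<exists>\<Gamma>. finite \<Gamma> \<and> (\<forall>R\<in>\<Gamma>. promise_rel R) \<and> F = poly \<Gamma>) \<longleftrightarrow>
         (projection_closed F \<and> finitizable F \<and> (1, id_fun) \<in> F)"
proof
  assume "\<exists>\<Gamma>. finite \<Gamma> \<and> (\<forall>R\<in>\<Gamma>. promise_rel R) \<and> F = poly \<Gamma>"
  then obtain \<Gamma> where G: "finite \<Gamma>" "\<forall>R\<in>\<Gamma>. promise_rel R" "F = poly \<Gamma>" by blast
  have "projection_closed (poly \<Gamma>)" unfolding projection_closed_def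
  proof (rule ballI)
    fix x assume x: "x \<in> poly \<Gamma>"
    obtain L f where xe: "x = (L, f)" by (cases x)
    have "\<forall>R \<pi>. \<pi> \<in> {0..<L} \<rightarrow> {0..<R} \<longrightarrow> (R, proj L f \<pi> R) \<in> poly \<Gamma>"
    proof (intro allI impI)
      fix R :: nat and \<pi> :: "nat \<Rightarrow> nat" assume "\<pi> \<in> {0..<L} \<rightarrow> {0..<R}"
      moreover have "(L, f) \<in> poly \<Gamma>" using x xe by simp
      ultimately show "(R, proj L f \<pi> R) \<in> poly \<Gamma>" using poly_proj by blast
    qed
    then show "case x of (L, f) \<Rightarrow> \<forall>R \<pi>. \<pi> \<in> {0..<L} \<rightarrow> {0..<R} \<longrightarrow> (R, proj L f \<pi> R) \<in> poly \<Gamma>"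
      using xe by simp
  qed
  moreover have "finitizable (poly \<Gamma>)" by (rule poly_finitizable[OF G(1,2)])
  moreover have "(1, id_fun) \<in> poly \<Gamma>" by (rule id_poly[OF G(2)])
  ultimately show "projection_closed F \<and> finitizable F \<and> (1, id_fun) \<in> F"
    unfolding G(3) by blast
next
  assume "projection_closed F \<and> finitizable F \<and> (1, id_fun) \<in> F"
  then have pc: "projection_closed F" and idF: "(1, id_fun) \<in> F"
    and "finitizable F" by auto
  then obtain R where Rf: "\<And>L f. is_fun L f \<Longrightarrow>
     ((L, f) \<in> F \<longleftrightarrow> (\<forall>\<pi> \<in> {0..<L} \<rightarrow> {0..<R}. (R, proj L f \<pi> R) \<in> F))"
    unfolding finitizable_def by blast
  show "\<exists>\<Gamma>. finite \<Gamma> \<and> (\<forall>R\<in>\<Gamma>. promise_rel R) \<and> F = poly \<Gamma>"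
  proof (cases "R = 0")
    case True
    have "F = poly {}"
    proof (rule set_eqI)
      fix x :: "nat \<times> ((nat \<Rightarrow> 'd) \<Rightarrow> 'd)"
      obtain L f where x: "x = (L, f)" by (cases x) auto
      show "x \<in> F \<longleftrightarrow> x \<in> poly {}"
      proof
        assume "x \<in> F" then show "x \<in> poly {}" using assms x by (auto simp: poly_def)
      next
        assume "x \<in> poly {}"
        then have isf: "is_fun L f" using x by (simp add: poly_def)
        then have "L > 0" by (simp add: is_fun_def)
        then have "{0..<L} \<rightarrow> {0..<R} = {}" using True by (auto simp: Pi_def)
        then have "\<forall>\<pi>\<in>{0..<L} \<rightarrow> {0..<R}. (R, proj L f \<pi> R) \<in> F" by blast
        then show "x \<in> F" using Rf[OF isf] x by blast
      qed
    qed
    then show ?thesis by blast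
  next
    case False
    define k where "k = card (tuples R :: (nat \<Rightarrow> 'd) set)"
    obtain enc :: "nat \<Rightarrow> (nat \<Rightarrow> 'd)" where enc: "bij_betw enc {0..<k} (tuples R)"
      using ex_bij_betw_nat_finite[OF finite_tuples] k_def by blast
    define col where "col = (\<lambda>i. \<lambda>j\<in>{0..<k}. enc j i)"
    define P where "P = col ` {0..<R}"
    define Q where "Q = (\<lambda>g. \<lambda>j\<in>{0..<k}. g (enc j)) ` {g. (R, g) \<in> F}"
    have encT: "j < k \<Longrightarrow> enc j \<in> tuples R" for j using enc by (auto simp: bij_betw_def)
    have PQ: "P \<subseteq> Q"
    proof
      fix p assume "p \<in> P"
      then obtain i where i: "i < R" "p = col i" by (auto simp: P_def)
      define g :: "(nat \<Rightarrow> 'd) \<Rightarrow> 'd" where "g = proj 1 id_fun (\<lambda>_. i) R"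
      have pcr: "\<And>L f R \<pi>. (L, f) \<in> F \<Longrightarrow> \<pi> \<in> {0..<L} \<rightarrow> {0..<R} \<Longrightarrow> (R, proj L f \<pi> R) \<in> F"
        using pc unfolding projection_closed_def by blast
      have "(\<lambda>_. i) \<in> {0..<1} \<rightarrow> {0..<R}" using i by auto
      from pcr[OF idF this] have "(R, g) \<in> F" unfolding g_def .
      moreover have "(\<lambda>j\<in>{0..<k}. g (enc j)) = p"
        unfolding i col_def
      proof (rule restrict_ext)
        fix j assume j: "j \<in> {0..<k}"
        have "g (enc j) = id_fun (\<lambda>ia\<in>{0..<1}. enc j i)" unfolding g_def using encT j
          by (simp add: proj_app)
        then show "g (enc j) = enc j i" by (simp only: id_fun_restr)
      qed
      ultimately show "p \<in> Q" unfolding Q_def by blast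
    qed
    have Qt: "Q \<subseteq> tuples k" unfolding Q_def by auto
    define \<Gamma> where "\<Gamma> = {(k, P, Q)}"
    have prG: "\<forall>r\<in>\<Gamma>. promise_rel r" using PQ Qt by (simp add: \<Gamma>_def promise_rel_def)
    have key: "weak_poly L f (k, P, Q) \<longleftrightarrow> (\<forall>\<pi> \<in> {0..<L} \<rightarrow> {0..<R}. (R, proj L f \<pi> R) \<in> F)"
      for L and f :: "(nat \<Rightarrow> 'd) \<Rightarrow> 'd"
    proof
      assume w: "weak_poly L f (k, P, Q)"
      show "\<forall>\<pi> \<in> {0..<L} \<rightarrow> {0..<R}. (R, proj L f \<pi> R) \<in> F"
      proof
        fix \<pi> assume pi: "\<pi> \<in> {0..<L} \<rightarrow> {0..<R}"
        define X where "X = (\<lambda>i. col (\<pi> i))"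
        have "\<forall>i<L. X i \<in> P" using pi by (auto simp: X_def P_def)
        moreover have "\<forall>X. (\<forall>i<L. X i \<in> P) \<longrightarrow> (\<lambda>j\<in>{0..<k}. f (\<lambda>i\<in>{0..<L}. X i j)) \<in> Q"
          using w by (simp only: weak_poly_def prod.case)
        ultimately have "(\<lambda>j\<in>{0..<k}. f (\<lambda>i\<in>{0..<L}. X i j)) \<in> Q"
          by (rule spec[where x=X, THEN mp, rotated])
        then obtain g where g: "(R, g) \<in> F"
          and geq: "(\<lambda>j\<in>{0..<k}. g (enc j)) = (\<lambda>j\<in>{0..<k}. f (\<lambda>i\<in>{0..<L}. X i j))"
          unfolding Q_def by auto
        have "g = proj L f \<pi> R"
        proof (rule extensionalityI)
          show "g \<in> extensional (tuples R)" using g assms by (auto simp: is_fun_def)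
          show "proj L f \<pi> R \<in> extensional (tuples R)" by (simp add: proj_def)
          fix y :: "nat \<Rightarrow> 'd" assume y: "y \<in> tuples R"
          have "y \<in> enc ` {0..<k}" using y enc by (simp add: bij_betw_def)
          then obtain j where j: "j < k" "y = enc j" by auto
          have "g (enc j) = f (\<lambda>i\<in>{0..<L}. X i j)" using fun_cong[OF geq, of j] j by simp
          also have "(\<lambda>i\<in>{0..<L}. X i j) = (\<lambda>i\<in>{0..<L}. enc j (\<pi> i))"
            using j by (intro restrict_ext) (simp add: X_def col_def)
          finally have e1: "g (enc j) = f (\<lambda>i\<in>{0..<L}. enc j (\<pi> i))" .
          have e2: "proj L f \<pi> R (enc j) = f (\<lambda>i\<in>{0..<L}. enc j (\<pi> i))"
            using encT j proj_app by blast
          show "g y = proj L f \<pi> R y" using e1 e2 j(2) by simp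
        qed
        then show "(R, proj L f \<pi> R) \<in> F" using g by simp
      qed
    next
      assume allp: "\<forall>\<pi> \<in> {0..<L} \<rightarrow> {0..<R}. (R, proj L f \<pi> R) \<in> F"
      show "weak_poly L f (k, P, Q)" unfolding weak_poly_def
      proof (simp only: prod.case, intro allI impI)
        fix X :: "nat \<Rightarrow> nat \<Rightarrow> 'd" assume X: "\<forall>i<L. X i \<in> P"
        define \<pi> where "\<pi> = (\<lambda>i. SOME i'. i' < R \<and> X i = col i')"
        have pi: "\<pi> i < R \<and> X i = col (\<pi> i)" if iL: "i < L" for i
        proof -
          have "X i \<in> col ` {0..<R}" using X iL P_def by blast
          then have "\<exists>i'. i' < R \<and> X i = col i'" by auto
          then show ?thesis unfolding \<pi>_def by (rule someI_ex)
        qed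
        have piR: "\<pi> \<in> {0..<L} \<rightarrow> {0..<R}"
        proof
          fix i assume "i \<in> {0..<L}"
          then show "\<pi> i \<in> {0..<R}" using pi by simp
        qed
        have "(R, proj L f \<pi> R) \<in> F" using allp piR by blast
        moreover have "(\<lambda>j\<in>{0..<k}. f (\<lambda>i\<in>{0..<L}. X i j)) = (\<lambda>j\<in>{0..<k}. proj L f \<pi> R (enc j))"
        proof (rule restrict_ext)
          fix j assume j: "j \<in> {0..<k}"
          have e1: "(\<lambda>i\<in>{0..<L}. X i j) = (\<lambda>i\<in>{0..<L}. enc j (\<pi> i))"
          proof (rule restrict_ext)
            fix i assume "i \<in> {0..<L}"
            then have "X i = col (\<pi> i)" using pi by simp
            then show "X i j = enc j (\<pi> i)" using j by (simp add: col_def)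
          qed
          have e2: "proj L f \<pi> R (enc j) = f (\<lambda>i\<in>{0..<L}. enc j (\<pi> i))"
            using j by (intro proj_app encT) simp
          show "f (\<lambda>i\<in>{0..<L}. X i j) = proj L f \<pi> R (enc j)"
            using e1 e2 by simp
        qed
        ultimately show "(\<lambda>j\<in>{0..<k}. f (\<lambda>i\<in>{0..<L}. X i j)) \<in> Q" unfolding Q_def by blast
      qed
    qed
    have "F = poly \<Gamma>"
    proof (rule set_eqI)
      fix x :: "nat \<times> ((nat \<Rightarrow> 'd) \<Rightarrow> 'd)"
      obtain L f where x: "x = (L, f)" by (cases x) auto
      show "x \<in> F \<longleftrightarrow> x \<in> poly \<Gamma>"
      proof
        assume xF: "x \<in> F"
        then have isf: "is_fun L f" using assms x by auto
        have "weak_poly L f (k, P, Q)" using Rf[OF isf] xF x key by simp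
        then show "x \<in> poly \<Gamma>" using isf x by (simp add: poly_def \<Gamma>_def)
      next
        assume "x \<in> poly \<Gamma>"
        then have isf: "is_fun L f" and "weak_poly L f (k, P, Q)" using x by (auto simp: poly_def \<Gamma>_def)
        then show "x \<in> F" using Rf[OF isf] x key by simp
      qed
    qed
    moreover have "finite \<Gamma>" by (simp add: \<Gamma>_def)
    ultimately show ?thesis using prG by blast
  qed
qed

end
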